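(* Let $\mathbb Q$ be a probability measure on $(\Omega,\mathcal F)$ equivalent to $\mathbb P$, and let $(\mathcal B_n)_{n\in\mathbb N_0}$ be $\sigma$-subfields. Then $\mathcal B_n\to\mathcal B_0$ strongly under $\mathbb P$ if and only if $\mathcal B_n\to\mathcal B_0$ strongly under $\mathbb Q$.
   Context: Let $(\Omega,\mathcal F,\mathbb P)$ be a (not necessarily complete) probability space and $\mathcal N:=\{F\in\mathcal F:\mathbb P(F)=0\}$. A $\sigma$-subfield is a sub-$\sigma$-field $\mathcal A\subset\mathcal F$ with $\mathcal A=\sigma(\mathcal A\cup\mathcal N)$. For a probability measure $\mathbb R\sim\mathbb P$ and a $\sigma$-subfield $\mathcal A$, $\mathbb R_{\mathcal A}f:=\mathbb E^{\mathbb R}[f\mid\mathcal A]$. We say $\mathcal B_n\to\mathcal B_0$ strongly under $\mathbb R$ if $\mathbb R_{\mathcal B_n}\mathbb 1_A\to\mathbb R_{\mathcal B_0}\mathbb 1_A$ in $\mathbb R$-probability for every $A\in\mathcal F$. *)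

theory Defs
  imports "HOL-Probability.Probability"
begin

text \<open>It is represented as a measure whose
  space is the space of M and whose sets are A (its own measure is irrelevant).\<close>
definition sigma_subfield :: "'a measure \<Rightarrow> 'a measure \<Rightarrow> bool" where
  "sigma_subfield M A \<longleftrightarrow> subalgebra M A \<and>
     sigma_sets (space M) (sets A \<union> null_sets M) = sets A"

definition conv_in_prob :: "'a measure \<Rightarrow> (nat \<Rightarrow> 'a \<Rightarrow> real) \<Rightarrow> ('a \<Rightarrow> real) \<Rightarrow> bool" where
  "conv_in_prob R f g \<longleftrightarrow>
     (\<forall>e>0. (\<lambda>n. measure R {x \<in> space R. e < \<bar>f n x - g x\<bar>}) \<longlonglongrightarrow> 0)"

definition strong_conv :: "'a measure \<Rightarrow> (nat \<Rightarrow> 'a measure) \<Rightarrow> bool" where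
  "strong_conv R B \<longleftrightarrow>
     (\<forall>A \<in> sets R. conv_in_prob R (\<lambda>n. real_cond_exp R (B n) (indicator A))
                                  (real_cond_exp R (B 0) (indicator A)))"

end

theory Submission imports Defs begin

lemma tendsto0_nonneg:
  fixes f :: "nat \<Rightarrow> real"
  assumes "\<And>n. 0 \<le> f n" "\<And>e. e > 0 \<Longrightarrow> eventually (\<lambda>n. f n < e) sequentially"
  shows "f \<longlonglongrightarrow> 0"
proof (rule order_tendstoI)
  fix a :: real assume "a < 0" then show "eventually (\<lambda>n. a < f n) sequentially"
    using assms(1) by (intro always_eventually allI) (meson less_le_trans)
next
  fix a :: real assume "0 < a" then show "eventually (\<lambda>n. f n < a) sequentially"
    using assms(2) by auto
qed

lemma cond_exp_L1_contr:
  assumes P: "prob_space P" and sub: "subalgebra P F" and f: "integrable P f"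
  shows "(\<integral>x. \<bar>real_cond_exp P F f x\<bar> \<partial>P) \<le> (\<integral>x. \<bar>f x\<bar> \<partial>P)"
proof -
  interpret prob_space P by fact
  interpret finite_measure_subalgebra P F using sub by unfold_locales
  have fm[measurable]: "f \<in> borel_measurable P" using f by auto
  have sm[measurable]: "(\<lambda>x. sgn (real_cond_exp P F f x)) \<in> borel_measurable F" by measurable
  have smP: "(\<lambda>x. sgn (real_cond_exp P F f x)) \<in> borel_measurable P"
    using measurable_from_subalg[OF sub sm] .
  have int: "integrable P (\<lambda>x. sgn (real_cond_exp P F f x) * f x)"
    by (rule Bochner_Integration.integrable_bound[OF integrable_abs[OF f]]) (auto simp: abs_mult abs_sgn_eq intro!: mult_left_le_one_le)
  have "(\<integral>x. \<bar>real_cond_exp P F f x\<bar> \<partial>P) = (\<integral>x. sgn (real_cond_exp P F f x) * real_cond_exp P F f x \<partial>P)"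
    by (simp add: abs_sgn mult.commute)
  also have "\<dots> = (\<integral>x. sgn (real_cond_exp P F f x) * f x \<partial>P)"
    by (rule real_cond_exp_intg(2)[OF int sm fm])
  also have "\<dots> \<le> (\<integral>x. \<bar>f x\<bar> \<partial>P)"
    by (rule integral_mono[OF int integrable_abs[OF f]]) (auto simp: sgn_real_def)
  finally show ?thesis .
qed

lemma cond_exp_L1_contr_diff:
  assumes P: "prob_space P" and sub: "subalgebra P F" and f: "integrable P f" and g: "integrable P g"
  shows "(\<integral>x. \<bar>real_cond_exp P F f x - real_cond_exp P F g x\<bar> \<partial>P) \<le> (\<integral>x. \<bar>f x - g x\<bar> \<partial>P)"
proof -
  interpret prob_space P by fact
  interpret finite_measure_subalgebra P F using sub by unfold_locales
  have "(\<integral>x. \<bar>real_cond_exp P F f x - real_cond_exp P F g x\<bar> \<partial>P) = (\<integral>x. \<bar>real_cond_exp P F (\<lambda>x. f x - g x) x\<bar> \<partial>P)"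
    apply (rule integral_cong_AE) using f g apply auto[2]
    using real_cond_exp_diff[OF f g] by eventually_elim simp
  also have "\<dots> \<le> (\<integral>x. \<bar>f x - g x\<bar> \<partial>P)"
    by (rule cond_exp_L1_contr[OF P sub]) (use f g in auto)
  finally show ?thesis .
qed

lemma density_AC:
  fixes Z :: "'a \<Rightarrow> real"
  assumes P: "prob_space P" and Zm[measurable]: "Z \<in> borel_measurable P" and Zpos: "\<And>x. 0 \<le> Z x"
    and Zint: "integrable P Z"
    and S[measurable]: "\<And>n. S n \<in> sets P" and lim: "(\<lambda>n. measure P (S n)) \<longlonglongrightarrow> 0"
  shows "(\<lambda>n. \<integral>x. Z x * indicator (S n) x \<partial>P) \<longlonglongrightarrow> 0"
proof -
  interpret prob_space P by fact
  have conv: "(\<lambda>m. \<integral>x. Z x - min (Z x) (real m) \<partial>P) \<longlonglongrightarrow> (\<integral>x. 0 \<partial>P)"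
  proof (rule integral_dominated_convergence[where w=Z])
    show "AE x in P. (\<lambda>m. Z x - min (Z x) (real m)) \<longlonglongrightarrow> 0"
    proof (rule AE_I2)
      fix x
      obtain k where k: "Z x \<le> real k" using real_arch_simple by blast
      have "eventually (\<lambda>m. Z x - min (Z x) (real m) = 0) sequentially"
        unfolding eventually_sequentially
        by (rule exI[of _ k]) (use k in \<open>auto simp: min_def\<close>)
      then show "(\<lambda>m. Z x - min (Z x) (real m)) \<longlonglongrightarrow> 0" by (rule tendsto_eventually)
    qed
    show "AE x in P. norm (Z x - min (Z x) (real m)) \<le> Z x" for m
      using Zpos by (intro AE_I2) (auto simp: min_def)
  qed (use Zint in auto)
  show ?thesis
  proof (rule tendsto0_nonneg)
    show "0 \<le> (\<integral>x. Z x * indicator (S n) x \<partial>P)" for n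
      using Zpos by (intro Bochner_Integration.integral_nonneg) (auto split: split_indicator)
    fix e :: real assume e: "e > 0"
    have "eventually (\<lambda>m. (\<integral>x. Z x - min (Z x) (real m) \<partial>P) < e/2) sequentially"
      by (rule order_tendstoD(2)[OF conv[simplified]]) (use e in auto)
    then obtain m where m: "(\<integral>x. Z x - min (Z x) (real m) \<partial>P) < e/2"
      using eventually_sequentially by auto
    have "eventually (\<lambda>n. measure P (S n) < e / (2 * (real m + 1))) sequentially"
      by (rule order_tendstoD(2)[OF lim]) (use e in auto)
    then show "eventually (\<lambda>n. (\<integral>x. Z x * indicator (S n) x \<partial>P) < e) sequentially"
    proof eventually_elim
      case (elim n)
      have imin: "integrable P (\<lambda>x. min (Z x) (real m))"
        by (rule Bochner_Integration.integrable_bound[OF Zint]) (use Zpos in \<open>auto simp: min_def\<close>)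
      have iS: "integrable P (\<lambda>x. (real m + 1) * indicator (S n) x)"
        by (auto simp: integrable_indicator_iff less_top[symmetric])
      have "(\<integral>x. Z x * indicator (S n) x \<partial>P) \<le> (\<integral>x. (real m + 1) * indicator (S n) x + (Z x - min (Z x) (real m)) \<partial>P)"
        by (rule integral_mono)
           (use Zint imin iS in \<open>auto simp: min_def split: split_indicator intro!: integrable_real_mult_indicator\<close>)
      also have "\<dots> = (real m + 1) * measure P (S n) + (\<integral>x. Z x - min (Z x) (real m) \<partial>P)"
        by (subst Bochner_Integration.integral_add) (use Zint in \<open>auto simp: integrable_indicator_iff less_top[symmetric]\<close>)
      also have "(real m + 1) * measure P (S n) < e/2"
        using elim by (simp add: field_simps)
      finally show ?case using m by linarith
    qed
  qed
qed

context
  fixes P :: "'a measure" and B :: "nat \<Rightarrow> 'a measure"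
  assumes P: "prob_space P" and subB: "\<And>n. subalgebra P (B n)"
begin

definition L1conv :: "('a \<Rightarrow> real) \<Rightarrow> bool" where
  "L1conv f \<longleftrightarrow> (\<lambda>n. \<integral>x. \<bar>real_cond_exp P (B n) f x - real_cond_exp P (B 0) f x\<bar> \<partial>P) \<longlonglongrightarrow> 0"

lemma L1conv_indicator:
  assumes sc: "strong_conv P B" and A: "A \<in> sets P"
  shows "L1conv (indicator A)"
proof -
  interpret prob_space P by fact
  define D where "D n x = real_cond_exp P (B n) (indicator A) x - real_cond_exp P (B 0) (indicator A) x" for n x
  have Dm[measurable]: "D n \<in> borel_measurable P" for n
    unfolding D_def by measurable
  have intA: "integrable P (indicator A :: 'a \<Rightarrow> real)" using A by (simp add: integrable_indicator_iff less_top[symmetric])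
  have b: "AE x in P. 0 \<le> real_cond_exp P (B n) (indicator A) x \<and> real_cond_exp P (B n) (indicator A) x \<le> 1" for n
  proof -
    interpret finite_measure_subalgebra P "B n" using subB by unfold_locales
    show ?thesis using real_cond_exp_ge_c[OF intA, of 0] real_cond_exp_le_c[OF intA, of 1]
      by (auto split: split_indicator)
  qed
  have Db: "AE x in P. \<bar>D n x\<bar> \<le> 1" for n
    using b[of n] b[of 0] unfolding D_def by eventually_elim auto
  have cip: "(\<lambda>n. measure P {x \<in> space P. e < \<bar>D n x\<bar>}) \<longlonglongrightarrow> 0" if "e > 0" for e
    using sc A that unfolding strong_conv_def conv_in_prob_def D_def by auto
  show ?thesis unfolding L1conv_def D_def[symmetric]
  proof (rule tendsto0_nonneg)
    fix e :: real assume e: "e > 0"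
    have "eventually (\<lambda>n. measure P {x \<in> space P. e/2 < \<bar>D n x\<bar>} < e/2) sequentially"
      by (rule order_tendstoD(2)[OF cip]) (use e in auto)
    then show "eventually (\<lambda>n. (\<integral>x. \<bar>D n x\<bar> \<partial>P) < e) sequentially"
    proof eventually_elim
      case (elim n)
      let ?S = "{x \<in> space P. e/2 < \<bar>D n x\<bar>}"
      have S: "?S \<in> sets P" by measurable
      have "(\<integral>x. \<bar>D n x\<bar> \<partial>P) \<le> (\<integral>x. e/2 + indicator ?S x \<partial>P)"
      proof (rule integral_mono_AE)
        show "integrable P (\<lambda>x. \<bar>D n x\<bar>)"
          by (rule Bochner_Integration.integrable_bound[of P "\<lambda>_. 1::real"]) (use Db[of n] in auto)
        show "integrable P (\<lambda>x. e/2 + indicator ?S x)"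
          using S by (intro Bochner_Integration.integrable_add) (auto simp: integrable_indicator_iff less_top[symmetric])
        show "AE x in P. \<bar>D n x\<bar> \<le> e/2 + indicator ?S x"
          using Db[of n] AE_space by eventually_elim (use e in \<open>auto split: split_indicator\<close>)
      qed
      also have "\<dots> = e/2 + measure P ?S"
        using S by (subst Bochner_Integration.integral_add) (auto simp: integrable_indicator_iff less_top[symmetric] prob_space)
      finally show ?case using elim by linarith
    qed
  qed simp
qed

lemma CE_cmult_AE:
  assumes "integrable P f"
  shows "AE x in P. real_cond_exp P (B n) (\<lambda>x. c * f x) x = c * real_cond_exp P (B n) f x"
proof -
  interpret prob_space P by (rule P)
  interpret finite_measure_subalgebra P "B n" using subB by unfold_locales
  show ?thesis using assms by (rule real_cond_exp_cmult)
qed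

lemma CE_add_AE:
  assumes "integrable P f" "integrable P g"
  shows "AE x in P. real_cond_exp P (B n) (\<lambda>x. f x + g x) x = real_cond_exp P (B n) f x + real_cond_exp P (B n) g x"
proof -
  interpret prob_space P by (rule P)
  interpret finite_measure_subalgebra P "B n" using subB by unfold_locales
  show ?thesis using assms by (rule real_cond_exp_add)
qed

lemma CE_int:
  assumes "integrable P f"
  shows "integrable P (real_cond_exp P (B n) f)"
proof -
  interpret prob_space P by (rule P)
  interpret finite_measure_subalgebra P "B n" using subB by unfold_locales
  show ?thesis using assms by (rule real_cond_exp_int)
qed

lemma L1conv_integrand_int:
  assumes "integrable P f"
  shows "integrable P (\<lambda>x. \<bar>real_cond_exp P (B n) f x - real_cond_exp P (B 0) f x\<bar>)"
  using CE_int[OF assms, of n] CE_int[OF assms, of 0] by auto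

lemma strong_L1:
  assumes sc: "strong_conv P B" and f: "integrable P f"
  shows "L1conv f"
  using f
proof (induct rule: integrable_induct)
  case (base A c)
  interpret prob_space P by (rule P)
  have intA: "integrable P (indicator A :: 'a \<Rightarrow> real)" using base by (simp add: integrable_indicator_iff less_top[symmetric])
  have eq: "(\<lambda>x. indicator A x *\<^sub>R c) = (\<lambda>x. c * indicator A x)" by auto
  have "(\<integral>x. \<bar>real_cond_exp P (B n) (\<lambda>x. c * indicator A x) x - real_cond_exp P (B 0) (\<lambda>x. c * indicator A x) x\<bar> \<partial>P)
     = \<bar>c\<bar> * (\<integral>x. \<bar>real_cond_exp P (B n) (indicator A) x - real_cond_exp P (B 0) (indicator A) x\<bar> \<partial>P)" for n
  proof -
    have "(\<integral>x. \<bar>real_cond_exp P (B n) (\<lambda>x. c * indicator A x) x - real_cond_exp P (B 0) (\<lambda>x. c * indicator A x) x\<bar> \<partial>P)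
      = (\<integral>x. \<bar>c\<bar> * \<bar>real_cond_exp P (B n) (indicator A) x - real_cond_exp P (B 0) (indicator A) x\<bar> \<partial>P)"
      apply (rule integral_cong_AE) apply simp apply simp
      using CE_cmult_AE[OF intA, of n c] CE_cmult_AE[OF intA, of 0 c]
      by eventually_elim (simp add: abs_mult right_diff_distrib[symmetric])
    then show ?thesis by simp
  qed
  moreover have "L1conv (indicator A)" by (rule L1conv_indicator[OF sc base(1)])
  ultimately show ?case unfolding eq L1conv_def
    using tendsto_mult[OF tendsto_const[of "\<bar>c\<bar>"]] by fastforce
next
  case (add f g)
  show ?case unfolding L1conv_def
  proof (rule tendsto_sandwich[of "\<lambda>_. 0" _ _ "\<lambda>n. (\<integral>x. \<bar>real_cond_exp P (B n) f x - real_cond_exp P (B 0) f x\<bar> \<partial>P) + (\<integral>x. \<bar>real_cond_exp P (B n) g x - real_cond_exp P (B 0) g x\<bar> \<partial>P)"])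
    show "\<forall>\<^sub>F n in sequentially. 0 \<le> (\<integral>x. \<bar>real_cond_exp P (B n) (\<lambda>x. f x + g x) x - real_cond_exp P (B 0) (\<lambda>x. f x + g x) x\<bar> \<partial>P)"
      by simp
    show "\<forall>\<^sub>F n in sequentially. (\<integral>x. \<bar>real_cond_exp P (B n) (\<lambda>x. f x + g x) x - real_cond_exp P (B 0) (\<lambda>x. f x + g x) x\<bar> \<partial>P)
       \<le> (\<integral>x. \<bar>real_cond_exp P (B n) f x - real_cond_exp P (B 0) f x\<bar> \<partial>P) + (\<integral>x. \<bar>real_cond_exp P (B n) g x - real_cond_exp P (B 0) g x\<bar> \<partial>P)"
    proof (intro always_eventually allI)
      fix n
      have "(\<integral>x. \<bar>real_cond_exp P (B n) (\<lambda>x. f x + g x) x - real_cond_exp P (B 0) (\<lambda>x. f x + g x) x\<bar> \<partial>P)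
        \<le> (\<integral>x. \<bar>real_cond_exp P (B n) f x - real_cond_exp P (B 0) f x\<bar> + \<bar>real_cond_exp P (B n) g x - real_cond_exp P (B 0) g x\<bar> \<partial>P)"
      proof (rule integral_mono_AE)
        show "integrable P (\<lambda>x. \<bar>real_cond_exp P (B n) (\<lambda>x. f x + g x) x - real_cond_exp P (B 0) (\<lambda>x. f x + g x) x\<bar>)"
          using add by (intro L1conv_integrand_int) auto
        show "integrable P (\<lambda>x. \<bar>real_cond_exp P (B n) f x - real_cond_exp P (B 0) f x\<bar> + \<bar>real_cond_exp P (B n) g x - real_cond_exp P (B 0) g x\<bar>)"
          using add L1conv_integrand_int by auto
        show "AE x in P. \<bar>real_cond_exp P (B n) (\<lambda>x. f x + g x) x - real_cond_exp P (B 0) (\<lambda>x. f x + g x) x\<bar>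
           \<le> \<bar>real_cond_exp P (B n) f x - real_cond_exp P (B 0) f x\<bar> + \<bar>real_cond_exp P (B n) g x - real_cond_exp P (B 0) g x\<bar>"
          using CE_add_AE[OF add(1,3), of n] CE_add_AE[OF add(1,3), of 0] by eventually_elim auto
      qed
      also have "\<dots> = (\<integral>x. \<bar>real_cond_exp P (B n) f x - real_cond_exp P (B 0) f x\<bar> \<partial>P) + (\<integral>x. \<bar>real_cond_exp P (B n) g x - real_cond_exp P (B 0) g x\<bar> \<partial>P)"
        using add L1conv_integrand_int by (intro Bochner_Integration.integral_add) auto
      finally show "(\<integral>x. \<bar>real_cond_exp P (B n) (\<lambda>x. f x + g x) x - real_cond_exp P (B 0) (\<lambda>x. f x + g x) x\<bar> \<partial>P)
       \<le> (\<integral>x. \<bar>real_cond_exp P (B n) f x - real_cond_exp P (B 0) f x\<bar> \<partial>P) + (\<integral>x. \<bar>real_cond_exp P (B n) g x - real_cond_exp P (B 0) g x\<bar> \<partial>P)" .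
    qed
  qed (use add in \<open>auto simp: L1conv_def intro: tendsto_add_zero\<close>)
next
  case (lim f s)
  interpret prob_space P by (rule P)
  have fm[measurable]: "f \<in> borel_measurable P" using lim by auto
  have sm[measurable]: "s i \<in> borel_measurable P" for i using lim by auto
  have conv: "(\<lambda>i. \<integral>x. \<bar>s i x - f x\<bar> \<partial>P) \<longlonglongrightarrow> 0"
  proof -
    have "(\<lambda>i. \<integral>x. \<bar>s i x - f x\<bar> \<partial>P) \<longlonglongrightarrow> (\<integral>x. 0 \<partial>P)"
    proof (rule integral_dominated_convergence[where w="\<lambda>x. 3 * \<bar>f x\<bar>"])
      show "integrable P (\<lambda>x. 3 * \<bar>f x\<bar>)" using lim by auto
      show "AE x in P. (\<lambda>i. \<bar>s i x - f x\<bar>) \<longlonglongrightarrow> 0"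
      proof (rule AE_I2)
        fix x assume "x \<in> space P"
        from tendsto_rabs[OF tendsto_diff[OF lim(3)[OF this] tendsto_const[of "f x"]]]
        show "(\<lambda>i. \<bar>s i x - f x\<bar>) \<longlonglongrightarrow> 0" by simp
      qed
      show "AE x in P. norm \<bar>s i x - f x\<bar> \<le> 3 * \<bar>f x\<bar>" for i
      proof (rule AE_I2)
        fix x assume "x \<in> space P"
        from lim(4)[OF this, of i] show "norm \<bar>s i x - f x\<bar> \<le> 3 * \<bar>f x\<bar>" by simp
      qed
    qed auto
    then show ?thesis by simp
  qed
  show ?case unfolding L1conv_def
  proof (rule tendsto0_nonneg)
    fix e :: real assume e: "e > 0"
    obtain i where i: "2 * (\<integral>x. \<bar>s i x - f x\<bar> \<partial>P) < e/2"
    proof -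
      have "eventually (\<lambda>i. (\<integral>x. \<bar>s i x - f x\<bar> \<partial>P) < e/4) sequentially"
        by (rule order_tendstoD(2)[OF conv]) (use e in auto)
      then obtain i where "(\<integral>x. \<bar>s i x - f x\<bar> \<partial>P) < e/4"
        using eventually_sequentially by auto
      then show ?thesis using that[of i] by auto
    qed
    have "eventually (\<lambda>n. (\<integral>x. \<bar>real_cond_exp P (B n) (s i) x - real_cond_exp P (B 0) (s i) x\<bar> \<partial>P) < e/2) sequentially"
      by (rule order_tendstoD(2)[OF lim(2)[of i, unfolded L1conv_def]]) (use e in auto)
    then show "eventually (\<lambda>n. (\<integral>x. \<bar>real_cond_exp P (B n) f x - real_cond_exp P (B 0) f x\<bar> \<partial>P) < e) sequentially"
    proof eventually_elim
      case (elim n)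
      let ?a = "\<lambda>x. \<bar>real_cond_exp P (B n) f x - real_cond_exp P (B n) (s i) x\<bar>"
      let ?b = "\<lambda>x. \<bar>real_cond_exp P (B n) (s i) x - real_cond_exp P (B 0) (s i) x\<bar>"
      let ?c = "\<lambda>x. \<bar>real_cond_exp P (B 0) (s i) x - real_cond_exp P (B 0) f x\<bar>"
      have ia: "integrable P ?a" using CE_int[OF lim(5), of n] CE_int[OF lim(1), of n] by auto
      have ib: "integrable P ?b" using L1conv_integrand_int[OF lim(1)] by auto
      have ic: "integrable P ?c" using CE_int[OF lim(5), of 0] CE_int[OF lim(1), of 0] by auto
      have "(\<integral>x. \<bar>real_cond_exp P (B n) f x - real_cond_exp P (B 0) f x\<bar> \<partial>P) \<le> (\<integral>x. ?a x + ?b x + ?c x \<partial>P)"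
        by (rule integral_mono) (use ia ib ic L1conv_integrand_int[OF lim(5)] in auto)
      also have "\<dots> = (\<integral>x. ?a x \<partial>P) + (\<integral>x. ?b x \<partial>P) + (\<integral>x. ?c x \<partial>P)"
        using ia ib ic by simp
      also have "(\<integral>x. ?a x \<partial>P) \<le> (\<integral>x. \<bar>s i x - f x\<bar> \<partial>P)"
        using cond_exp_L1_contr_diff[OF P subB lim(5) lim(1), of n]
        by (simp add: abs_minus_commute)
      also have "(\<integral>x. ?c x \<partial>P) \<le> (\<integral>x. \<bar>s i x - f x\<bar> \<partial>P)"
        using cond_exp_L1_contr_diff[OF P subB lim(1) lim(5), of 0] .
      finally show ?case using i elim by linarith
    qed
  qed simp
qed

end


context
  fixes P Q :: "'a measure" and B :: "nat \<Rightarrow> 'a measure"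
  assumes P: "prob_space P" and Q: "prob_space Q" and sets_eq: "sets Q = sets P"
    and null_eq: "null_sets Q = null_sets P" and subB: "\<And>n. subalgebra P (B n)"
begin

lemma space_eq: "space Q = space P"
  using sets_eq by (rule sets_eq_imp_space_eq)

lemma ae_eq: "ae_filter Q = ae_filter P"
  unfolding ae_filter_def space_eq null_eq ..

lemma subBQ: "subalgebra Q (B n)"
  using subB[of n] unfolding subalgebra_def space_eq sets_eq .

lemma density_ex:
  obtains Z :: "'a \<Rightarrow> real" where "Z \<in> borel_measurable P" "\<And>x. 0 \<le> Z x"
    "Q = density P (\<lambda>x. ennreal (Z x))" "integrable P Z"
proof -
  interpret prob_space P by (rule P)
  have ac: "absolutely_continuous P Q"
    unfolding absolutely_continuous_def using null_eq by simp
  have fQ: "finite_measure Q" using Q by (simp add: prob_space_def)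
  obtain D where D: "D \<in> borel_measurable P" "AE x in P. RN_deriv P Q x = ennreal (D x)" "\<And>x. 0 \<le> D x"
    using real_RN_deriv[OF fQ ac sets_eq] by metis
  have "Q = density P (RN_deriv P Q)" using density_RN_deriv[OF ac sets_eq] by simp
  also have "\<dots> = density P (\<lambda>x. ennreal (D x))"
    by (rule density_cong) (use D in auto)
  finally have Qd: "Q = density P (\<lambda>x. ennreal (D x))" .
  have "integrable Q (\<lambda>_. 1::real)"
    using Q by (simp add: finite_measure.integrable_const prob_space_def)
  then have "integrable P (\<lambda>x. D x *\<^sub>R (1::real))"
    unfolding Qd using D by (subst (asm) integrable_density) auto
  then have "integrable P D" by simp
  then show ?thesis using that D Qd by blast
qed


context
  fixes Z :: "'a \<Rightarrow> real"
  assumes Zm[measurable]: "Z \<in> borel_measurable P" and Zpos: "\<And>x. 0 \<le> Z x"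
    and Qd: "Q = density P (\<lambda>x. ennreal (Z x))" and Zint: "integrable P Z"
begin

lemma intQ:
  assumes [measurable]: "f \<in> borel_measurable P"
  shows "(\<integral>x. f x \<partial>Q) = (\<integral>x. Z x * f x \<partial>P)"
  unfolding Qd by (subst integral_density) (use Zpos in auto)

lemma Y_bounds:
  assumes A: "A \<in> sets P"
  shows "AE x in P. 0 \<le> real_cond_exp Q (B n) (indicator A) x \<and> real_cond_exp Q (B n) (indicator A) x \<le> 1"
proof -
  interpret prob_space Q by (rule Q)
  interpret finite_measure_subalgebra Q "B n" using subBQ by unfold_locales
  have intA: "integrable Q (indicator A :: 'a \<Rightarrow> real)" using A sets_eq
    by (simp add: integrable_indicator_iff less_top[symmetric])
  have "AE x in Q. 0 \<le> real_cond_exp Q (B n) (indicator A) x \<and> real_cond_exp Q (B n) (indicator A) x \<le> 1"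
    using real_cond_exp_ge_c[OF intA, of 0] real_cond_exp_le_c[OF intA, of 1]
    by (auto split: split_indicator)
  then show ?thesis unfolding ae_eq .
qed

lemma bayes:
  assumes A: "A \<in> sets P"
  shows "AE x in P. real_cond_exp P (B n) (\<lambda>x. Z x * indicator A x) x
      = real_cond_exp Q (B n) (indicator A) x * real_cond_exp P (B n) Z x"
proof -
  interpret P: prob_space P by (rule P)
  interpret Q: prob_space Q by (rule Q)
  interpret FP: finite_measure_subalgebra P "B n" using subB by unfold_locales
  interpret FQ: finite_measure_subalgebra Q "B n" using subBQ by unfold_locales
  let ?Y = "real_cond_exp Q (B n) (indicator A)"
  let ?W = "real_cond_exp P (B n) Z"
  have Ym[measurable]: "?Y \<in> borel_measurable (B n)" by simp
  have YmP[measurable]: "?Y \<in> borel_measurable P" 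
    using borel_measurable_cond_exp2[of Q "B n" "indicator A"] sets_eq by (simp cong: measurable_cong_sets)
  have Wm[measurable]: "?W \<in> borel_measurable (B n)" by simp
  have WmP[measurable]: "?W \<in> borel_measurable P" by simp
  have Am[measurable]: "A \<in> sets P" by fact
  have Yb: "AE x in P. \<bar>?Y x\<bar> \<le> 1" using Y_bounds[OF A, of n] by eventually_elim auto
  have Wint: "integrable P ?W" using FP.real_cond_exp_int(1)[OF Zint] .
  have YWint: "integrable P (\<lambda>x. ?Y x * ?W x)"
    by (rule Bochner_Integration.integrable_bound[OF Wint])
       (use Yb in \<open>auto simp: abs_mult elim!: eventually_mono intro: mult_left_le_one_le\<close>)
  have ZAint: "integrable P (\<lambda>x. Z x * indicator A x)"
    by (rule integrable_real_mult_indicator[OF A Zint])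
  show ?thesis
  proof (rule FP.real_cond_exp_charact)
    fix C assume C: "C \<in> sets (B n)"
    have CP[measurable]: "C \<in> sets P" using C subB[of n] by (auto simp: subalgebra_def)
    have CQ: "C \<in> sets Q" using CP sets_eq by simp
    have Cm[measurable]: "(indicator C :: 'a \<Rightarrow> real) \<in> borel_measurable (B n)" using C by simp
    have "(\<integral>x\<in>C. ?Y x * ?W x \<partial>P) = (\<integral>x. (indicator C x * ?Y x) * ?W x \<partial>P)"
      unfolding set_lebesgue_integral_def by (simp add: mult_ac)
    also have "\<dots> = (\<integral>x. (indicator C x * ?Y x) * Z x \<partial>P)"
    proof (rule FP.real_cond_exp_intg(2))
      show "integrable P (\<lambda>x. indicator C x * ?Y x * Z x)"
        by (rule Bochner_Integration.integrable_bound[OF Zint])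
           (use Yb Zpos in \<open>auto simp: abs_mult elim!: eventually_mono intro: mult_left_le_one_le split: split_indicator\<close>)
    qed auto
    also have "\<dots> = (\<integral>x. indicator C x * ?Y x \<partial>Q)"
      by (subst intQ) (auto simp: mult_ac)
    also have "\<dots> = (\<integral>x. indicator C x * indicator A x \<partial>Q)"
    proof (rule FQ.real_cond_exp_intg(2))
      show "integrable Q (\<lambda>x. indicator C x * indicator A x :: real)"
        using A CQ sets_eq by (auto simp: indicator_inter_arith[symmetric] integrable_indicator_iff less_top[symmetric])
      show "(indicator A :: 'a \<Rightarrow> real) \<in> borel_measurable Q" using A sets_eq by simp
    qed (use Cm in auto)
    also have "\<dots> = (\<integral>x\<in>C. Z x * indicator A x \<partial>P)"
      unfolding set_lebesgue_integral_def by (subst intQ) (auto simp: mult_ac)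
    finally show "(\<integral>x\<in>C. Z x * indicator A x \<partial>P) = (\<integral>x\<in>C. ?Y x * ?W x \<partial>P)" by simp
  qed (use ZAint YWint in auto)
qed


lemma absQ:
  assumes [measurable]: "S \<in> sets P"
  shows "measure Q S = (\<integral>x. Z x * indicator S x \<partial>P)"
proof -
  have "measure Q S = (\<integral>x. indicator S x \<partial>Q)"
    using assms sets_eq sets.sets_into_space[of S Q] by (simp add: Int_absorb2)
  also have "\<dots> = (\<integral>x. Z x * indicator S x \<partial>P)" by (rule intQ) simp
  finally show ?thesis .
qed

lemma key_ineq:
  fixes y y0 w w0 :: real
  assumes "\<bar>y\<bar> \<le> 1"
  shows "\<bar>(y - y0) * w0\<bar> \<le> \<bar>y * w - y0 * w0\<bar> + \<bar>w - w0\<bar>"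
proof -
  have "(y - y0) * w0 = (y * w - y0 * w0) - y * (w - w0)" by algebra
  then have "\<bar>(y - y0) * w0\<bar> \<le> \<bar>y * w - y0 * w0\<bar> + \<bar>y * (w - w0)\<bar>" by linarith
  also have "\<bar>y * (w - w0)\<bar> \<le> \<bar>w - w0\<bar>" using assms by (simp add: abs_mult mult_left_le_one_le)
  finally show ?thesis by simp
qed

lemma one_dir:
  assumes sc: "strong_conv P B"
  shows "strong_conv Q B"
  unfolding strong_conv_def conv_in_prob_def
proof (intro ballI allI impI)
  interpret P: prob_space P by (rule P)
  interpret Q: prob_space Q by (rule Q)
  fix A and e :: real
  assume AQ: "A \<in> sets Q" and e: "0 < e"
  have A[measurable]: "A \<in> sets P" using AQ sets_eq by simp
  define Y where "Y n = real_cond_exp Q (B n) (indicator A)" for n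
  define W where "W n = real_cond_exp P (B n) Z" for n
  define U where "U n = real_cond_exp P (B n) (\<lambda>x. Z x * indicator A x)" for n
  define V where "V n x = \<bar>(Y n x - Y 0 x) * W 0 x\<bar>" for n x
  have Ym[measurable]: "Y n \<in> borel_measurable P" for n
    unfolding Y_def using borel_measurable_cond_exp2[of Q "B n" "indicator A"] sets_eq by (simp cong: measurable_cong_sets)
  have Wm[measurable]: "W n \<in> borel_measurable P" for n unfolding W_def by simp
  have W0m[measurable]: "W 0 \<in> borel_measurable (B 0)" unfolding W_def by simp
  have Vm[measurable]: "V n \<in> borel_measurable P" for n unfolding V_def by measurable
  have ZAint: "integrable P (\<lambda>x. Z x * indicator A x)"
    by (rule integrable_real_mult_indicator[OF A Zint])
  have LW: "(\<lambda>n. \<integral>x. \<bar>W n x - W 0 x\<bar> \<partial>P) \<longlonglongrightarrow> 0"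
    using strong_L1[OF P subB sc Zint] unfolding L1conv_def[OF P subB] W_def .
  have LU: "(\<lambda>n. \<integral>x. \<bar>U n x - U 0 x\<bar> \<partial>P) \<longlonglongrightarrow> 0"
    using strong_L1[OF P subB sc ZAint] unfolding L1conv_def[OF P subB] U_def .
  have Wint: "integrable P (W n)" for n
    unfolding W_def by (rule CE_int[OF P subB Zint])
  have Uint: "integrable P (U n)" for n
    unfolding U_def by (rule CE_int[OF P subB ZAint])
  have Yb: "AE x in P. \<bar>Y n x\<bar> \<le> 1" for n
    using Y_bounds[OF A, of n] unfolding Y_def by eventually_elim auto
  have bay: "AE x in P. U n x = Y n x * W n x" for n
    using bayes[OF A, of n] unfolding U_def Y_def W_def .
  have Vint: "integrable P (V n)" for n
    by (rule Bochner_Integration.integrable_bound[of P "\<lambda>x. 2 * W 0 x"])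
       (use Wint in simp, simp,
        use Yb[of n] Yb[of 0] in \<open>eventually_elim, auto simp: V_def abs_mult intro!: mult_right_mono\<close>)
  have LV: "(\<lambda>n. \<integral>x. V n x \<partial>P) \<longlonglongrightarrow> 0"
  proof (rule tendsto_sandwich[of "\<lambda>_. 0" _ _ "\<lambda>n. (\<integral>x. \<bar>U n x - U 0 x\<bar> \<partial>P) + (\<integral>x. \<bar>W n x - W 0 x\<bar> \<partial>P)"])
    show "\<forall>\<^sub>F n in sequentially. 0 \<le> (\<integral>x. V n x \<partial>P)"
      by (simp add: V_def)
    show "\<forall>\<^sub>F n in sequentially. (\<integral>x. V n x \<partial>P) \<le> (\<integral>x. \<bar>U n x - U 0 x\<bar> \<partial>P) + (\<integral>x. \<bar>W n x - W 0 x\<bar> \<partial>P)"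
    proof (intro always_eventually allI)
      fix n
      have "(\<integral>x. V n x \<partial>P) \<le> (\<integral>x. \<bar>U n x - U 0 x\<bar> + \<bar>W n x - W 0 x\<bar> \<partial>P)"
      proof (rule integral_mono_AE)
        show "integrable P (\<lambda>x. \<bar>U n x - U 0 x\<bar> + \<bar>W n x - W 0 x\<bar>)" using Uint Wint by auto
        show "AE x in P. V n x \<le> \<bar>U n x - U 0 x\<bar> + \<bar>W n x - W 0 x\<bar>"
          using Yb[of n] bay[of n] bay[of 0] unfolding V_def
          by eventually_elim (simp add: key_ineq)
      qed (rule Vint)
      also have "\<dots> = (\<integral>x. \<bar>U n x - U 0 x\<bar> \<partial>P) + (\<integral>x. \<bar>W n x - W 0 x\<bar> \<partial>P)"
        using Uint Wint by (intro Bochner_Integration.integral_add) auto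
      finally show "(\<integral>x. V n x \<partial>P) \<le> (\<integral>x. \<bar>U n x - U 0 x\<bar> \<partial>P) + (\<integral>x. \<bar>W n x - W 0 x\<bar> \<partial>P)" .
    qed
  qed (use LU LW in \<open>auto intro: tendsto_add_zero\<close>)
  have SQ: "(\<lambda>n. measure Q {x \<in> space P. c \<le> V n x}) \<longlonglongrightarrow> 0" if c: "c > 0" for c
  proof -
    have SP: "(\<lambda>n. measure P {x \<in> space P. c \<le> V n x}) \<longlonglongrightarrow> 0"
    proof (rule tendsto_sandwich[of "\<lambda>_. 0" _ _ "\<lambda>n. (\<integral>x. V n x \<partial>P) / c"])
      show "\<forall>\<^sub>F n in sequentially. measure P {x \<in> space P. c \<le> V n x} \<le> (\<integral>x. V n x \<partial>P) / c"
        by (intro always_eventually allI integral_Markov_inequality_measure[OF Vint, of "space P"])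
           (use c in \<open>auto simp: V_def\<close>)
      show "(\<lambda>n. (\<integral>x. V n x \<partial>P) / c) \<longlonglongrightarrow> 0"
        using tendsto_divide[OF LV tendsto_const[of c]] c by simp
    qed auto
    have "(\<lambda>n. \<integral>x. Z x * indicator {x \<in> space P. c \<le> V n x} x \<partial>P) \<longlonglongrightarrow> 0"
      by (rule density_AC[OF P Zm Zpos Zint _ SP]) measurable
    then show ?thesis by (subst absQ) auto
  qed
  have TQ: "measure Q {x \<in> space P. W 0 x \<le> d} \<le> d" if d: "d > 0" for d
  proof -
    let ?T = "{x \<in> space P. W 0 x \<le> d}"
    have TB: "?T \<in> sets (B 0)"
    proof -
      have sp: "space (B 0) = space P" using subB[of 0] unfolding subalgebra_def by simp
      have "{x \<in> space (B 0). W 0 x \<le> d} \<in> sets (B 0)" by measurable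
      then show ?thesis unfolding sp .
    qed
    have T[measurable]: "?T \<in> sets P" using TB subB[of 0] by (auto simp: subalgebra_def)
    interpret FP: finite_measure_subalgebra P "B 0" using subB by unfold_locales
    have "measure Q ?T = (\<integral>x. Z x * indicator ?T x \<partial>P)" by (rule absQ) simp
    also have "\<dots> = (\<integral>x. indicator ?T x * W 0 x \<partial>P)"
      unfolding W_def
      by (subst FP.real_cond_exp_intg(2)) (use Zint TB[unfolded W_def] in \<open>auto simp: mult_ac integrable_real_mult_indicator intro: borel_measurable_indicator\<close>)
    also have "\<dots> \<le> (\<integral>x. d \<partial>P)"
      by (rule integral_mono) (use Wint d in \<open>auto split: split_indicator simp: integrable_real_mult_indicator mult.commute[of "indicator _ _"]\<close>)
    also have "\<dots> = d" by (simp add: P.prob_space)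
    finally show ?thesis .
  qed
  have posQ: "0 \<le> measure Q S" for S by simp
  show "(\<lambda>n. measure Q {x \<in> space Q. e < \<bar>Y n x - Y 0 x\<bar>}) \<longlonglongrightarrow> 0"
  proof (rule tendsto0_nonneg)
    fix eps :: real assume eps: "eps > 0"
    define d where "d = eps / 2"
    have d: "d > 0" using eps by (simp add: d_def)
    have "eventually (\<lambda>n. measure Q {x \<in> space P. e * d \<le> V n x} < eps/2) sequentially"
      by (rule order_tendstoD(2)[OF SQ]) (use e d eps in auto)
    then show "eventually (\<lambda>n. measure Q {x \<in> space Q. e < \<bar>Y n x - Y 0 x\<bar>} < eps) sequentially"
    proof eventually_elim
      case (elim n)
      let ?S = "{x \<in> space P. e * d \<le> V n x}"
      let ?T = "{x \<in> space P. W 0 x \<le> d}"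
      have sub: "{x \<in> space Q. e < \<bar>Y n x - Y 0 x\<bar>} \<subseteq> ?S \<union> ?T"
      proof
        fix x assume x: "x \<in> {x \<in> space Q. e < \<bar>Y n x - Y 0 x\<bar>}"
        show "x \<in> ?S \<union> ?T"
        proof (cases "W 0 x \<le> d")
          case False
          then have "e * d \<le> \<bar>Y n x - Y 0 x\<bar> * \<bar>W 0 x\<bar>"
            using x e d by (intro mult_mono) auto
          then show ?thesis using x space_eq by (auto simp: V_def abs_mult)
        qed (use x space_eq in auto)
      qed
      have SsP: "?S \<in> sets Q" "?T \<in> sets Q" unfolding sets_eq by measurable
      have "measure Q {x \<in> space Q. e < \<bar>Y n x - Y 0 x\<bar>} \<le> measure Q (?S \<union> ?T)"
        by (rule Q.finite_measure_mono[OF sub]) (use SsP in auto)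
      also have "\<dots> \<le> measure Q ?S + measure Q ?T" by (rule measure_Un_le) (use SsP in auto)
      also have "measure Q ?T \<le> d" by (rule TQ[OF d])
      finally show ?case using elim d_def by linarith
    qed
  qed (rule posQ)
qed

end

lemma one_dir':
  assumes sc: "strong_conv P B"
  shows "strong_conv Q B"
proof -
  obtain Z where "Z \<in> borel_measurable P" "\<And>x. 0 \<le> Z x" "Q = density P (\<lambda>x. ennreal (Z x))" "integrable P Z"
    using density_ex by metis
  then show ?thesis using one_dir sc by blast
qed

end

theorem proposition4p4:
  fixes P Q :: "'a measure" and B :: "nat \<Rightarrow> 'a measure"
  assumes "prob_space P" and "prob_space Q"
    and "sets Q = sets P" and "null_sets Q = null_sets P"
    and "\<And>n. sigma_subfield P (B n)"
  shows "strong_conv P B \<longleftrightarrow> strong_conv Q B"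
proof -
  have sP: "subalgebra P (B n)" for n using assms(5)[of n] by (simp add: sigma_subfield_def)
  have sQ: "subalgebra Q (B n)" for n by (rule subBQ[of P Q B, OF assms(1-4) sP])
  show ?thesis
    using one_dir'[of P Q B, OF assms(1-4) sP] one_dir'[of Q P B, OF assms(2,1) assms(3,4)[symmetric] sQ] by blast
qed

end
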